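(* Let $q,\hat q$ be exponential factors in distinct Galois orbits, with common part $q_c$ and fission exponent $f_{q,\hat q}$. Then the set of nonzero values among $\mathrm{slope}(\sigma^i(q)-\sigma^j(\hat q))$, $0\le i<\mathrm{ram}(q)$, $0\le j<\mathrm{ram}(\hat q)$, equals $\mathrm{Levels}(q_c)\sqcup\{f_{q,\hat q}\}$. Moreover, if $q,\hat q$ are compatible, then the function $(i,j)\mapsto\mathrm{slope}(\sigma^i(q)-\sigma^j(\hat q))$ on $\mathbb Z\times\mathbb Z$ is determined by $\mathrm{Levels}(q_c)$ and $f_{q,\hat q}$: if $q',\hat q'$ is another compatible pair in distinct orbits with $\mathrm{Levels}(q'_c)=\mathrm{Levels}(q_c)$ and $f_{q',\hat q'}=f_{q,\hat q}$, then $\mathrm{slope}(\sigma^i(q')-\sigma^j(\hat q'))=\mathrm{slope}(\sigma^i(q)-\sigma^j(\hat q))$ for all $i,j\in\mathbb Z$.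
   Context: Exponential factors: finite sums $q=\sum_ka_kx^k$, $a_k\in\mathbb C$, $k\in\mathbb Q_{>0}$; $E(q)$ = set of exponents with $a_k\ne0$; $\mathrm{slope}(q)=\max E(q)$ ($0$ if $q=0$); $\mathrm{ram}(q)$ = least $r\ge1$ with $q\in x^{1/r}\mathbb C[x^{1/r}]$. Galois operator $\sigma(\sum a_kx^k)=\sum a_ke^{-2\pi\sqrt{-1}k}x^k$; the Galois orbit (Stokes circle) $\langle q\rangle=\{\sigma^i(q)\}$ has $\mathrm{ram}(q)$ elements. Truncation $\tau_k(\sum a_{k'}x^{k'})=\sum_{k'\ge k}a_{k'}x^{k'}$. $\mathrm{Levels}(q)=\{\mathrm{slope}(q-\sigma^i(q)):i\in\mathbb Z\}\setminus\{0\}$. Common part and fission exponent: for $q,\hat q$ in distinct Galois orbits, if some $k\in E(q)$ satisfies $\langle\tau_k(q)\rangle=\langle\tau_k(\hat q)\rangle$, let $k$ be the smallest such and set $q_c=\tau_k(q)$, $\hat q_c=\tau_k(\hat q)$; otherwise $q_c=\hat q_c=0$. The fission exponent is $f_{q,\hat q}=\max(\mathrm{slope}(q-q_c),\mathrm{slope}(\hat q-\hat q_c))$. The pair is compatible if $q_c=\hat q_c$. *)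

theory Defs
  imports Complex_Main
begin

text \<open>An exponential factor q = sum a_k x^k is represented by its coefficient
function rat \<Rightarrow> complex (k \<mapsto> a_k), finitely supported on positive rationals.\<close>

definition expfac :: "(rat \<Rightarrow> complex) \<Rightarrow> bool" where
  "expfac q \<longleftrightarrow> finite {k. q k \<noteq> 0} \<and> (\<forall>k. q k \<noteq> 0 \<longrightarrow> k > 0)"

definition E :: "(rat \<Rightarrow> complex) \<Rightarrow> rat set" where
  "E q = {k. q k \<noteq> 0}"

definition slope :: "(rat \<Rightarrow> complex) \<Rightarrow> rat" where
  "slope q = (if E q = {} then 0 else Max (E q))"

definition ram :: "(rat \<Rightarrow> complex) \<Rightarrow> nat" where
  "ram q = (LEAST r::nat. r \<ge> 1 \<and> (\<forall>k\<in>E q. of_nat r * k \<in> \<int>))"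

definition diff :: "(rat \<Rightarrow> complex) \<Rightarrow> (rat \<Rightarrow> complex) \<Rightarrow> (rat \<Rightarrow> complex)" where
  "diff q p = (\<lambda>k. q k - p k)"

definition sigma_pow :: "int \<Rightarrow> (rat \<Rightarrow> complex) \<Rightarrow> (rat \<Rightarrow> complex)" where
  "sigma_pow i q = (\<lambda>k. cis (- 2 * pi * of_rat k * of_int i) * q k)"

definition orbit :: "(rat \<Rightarrow> complex) \<Rightarrow> (rat \<Rightarrow> complex) set" where
  "orbit q = {sigma_pow i q | i. True}"

definition trunc :: "rat \<Rightarrow> (rat \<Rightarrow> complex) \<Rightarrow> (rat \<Rightarrow> complex)" where
  "trunc k q = (\<lambda>k'. if k' \<ge> k then q k' else 0)"

definition Levels :: "(rat \<Rightarrow> complex) \<Rightarrow> rat set" where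
  "Levels q = {slope (diff q (sigma_pow i q)) | i. True} - {0}"

definition has_common :: "(rat \<Rightarrow> complex) \<Rightarrow> (rat \<Rightarrow> complex) \<Rightarrow> bool" where
  "has_common q qh \<longleftrightarrow> (\<exists>k\<in>E q. orbit (trunc k q) = orbit (trunc k qh))"

definition common_exp :: "(rat \<Rightarrow> complex) \<Rightarrow> (rat \<Rightarrow> complex) \<Rightarrow> rat" where
  "common_exp q qh = (LEAST k. k \<in> E q \<and> orbit (trunc k q) = orbit (trunc k qh))"

definition common_part :: "(rat \<Rightarrow> complex) \<Rightarrow> (rat \<Rightarrow> complex) \<Rightarrow> (rat \<Rightarrow> complex)" where
  "common_part q qh = (if has_common q qh then trunc (common_exp q qh) q else (\<lambda>_. 0))"

definition common_part_hat :: "(rat \<Rightarrow> complex) \<Rightarrow> (rat \<Rightarrow> complex) \<Rightarrow> (rat \<Rightarrow> complex)" where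
  "common_part_hat q qh = (if has_common q qh then trunc (common_exp q qh) qh else (\<lambda>_. 0))"

definition fission :: "(rat \<Rightarrow> complex) \<Rightarrow> (rat \<Rightarrow> complex) \<Rightarrow> rat" where
  "fission q qh = max (slope (diff q (common_part q qh))) (slope (diff qh (common_part_hat q qh)))"

definition compatible :: "(rat \<Rightarrow> complex) \<Rightarrow> (rat \<Rightarrow> complex) \<Rightarrow> bool" where
  "compatible q qh \<longleftrightarrow> common_part q qh = common_part_hat q qh"

end

theory Submission
  imports Defs
begin

lemma sp_add: "sigma_pow i (sigma_pow j q) = sigma_pow (i + j) q"
  unfolding sigma_pow_def
proof (rule ext)
  fix k
  have "cis (- 2 * pi * of_rat k * of_int i) * cis (- 2 * pi * of_rat k * of_int j)
      = cis (- 2 * pi * of_rat k * of_int (i + j))"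
    by (simp add: cis_mult ring_distribs)
  then show "cis (- 2 * pi * of_rat k * of_int i) * (cis (- 2 * pi * of_rat k * of_int j) * q k) =
         cis (- 2 * pi * of_rat k * of_int (i + j)) * q k"
    by (metis mult.assoc)
qed

lemma sp_0[simp]: "sigma_pow 0 q = q"
  unfolding sigma_pow_def by simp

lemma sp_diff: "sigma_pow i (diff p q) = diff (sigma_pow i p) (sigma_pow i q)"
  unfolding sigma_pow_def diff_def by (rule ext) (simp add: algebra_simps)

lemma sp_app_zero[simp]: "sigma_pow i q k = 0 \<longleftrightarrow> q k = 0"
  unfolding sigma_pow_def by simp

lemma E_sp[simp]: "E (sigma_pow i q) = E q"
  unfolding E_def by simp

lemma slope_sp[simp]: "slope (sigma_pow i q) = slope q"
  unfolding slope_def by simp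

lemma sp_inv: "sigma_pow (-i) (sigma_pow i q) = q"
  by (simp add: sp_add)

lemma sp_inj: "sigma_pow i p = sigma_pow i q \<Longrightarrow> p = q"
  by (metis sp_inv)

lemma trunc_sp: "trunc k (sigma_pow i q) = sigma_pow i (trunc k q)"
  unfolding trunc_def sigma_pow_def by (rule ext) simp

lemma orbit_sp: "orbit (sigma_pow n p) = orbit p"
  unfolding orbit_def
proof (auto simp: sp_add)
  fix i show "\<exists>ia. sigma_pow i p = sigma_pow (ia + n) p"
    by (rule exI[of _ "i - n"]) simp
qed

lemma in_orbit_self: "p \<in> orbit p"
  unfolding orbit_def by (auto intro: exI[of _ 0])

lemma orbit_eqD: "orbit p = orbit q \<Longrightarrow> \<exists>n. q = sigma_pow n p"
  using in_orbit_self[of q] unfolding orbit_def by auto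

lemma cis_int_iff: "cis (- 2 * pi * x) = 1 \<longleftrightarrow> x \<in> \<int>"
proof
  assume h: "cis (- 2 * pi * x) = 1"
  have "cos (- 2 * pi * x) = 1" using arg_cong[OF h, of Re] by simp
  from cos_one_2pi_int[THEN iffD1, OF this] obtain n::int where eq: "- 2 * pi * x = of_int n * 2 * pi" by blast
  have "2 * pi * (x + of_int n) = 0" using eq by (simp add: algebra_simps)
  then have "x = - of_int n" by simp
  then show "x \<in> \<int>" by simp
next
  assume "x \<in> \<int>"
  then have "- x \<in> \<int>" by simp
  from cis_multiple_2pi[OF this] show "cis (- 2 * pi * x) = 1" by simp
qed

lemma sp_id: "(\<And>k. k \<in> E p \<Longrightarrow> of_rat k * of_int m \<in> (\<int>::real set)) \<Longrightarrow> sigma_pow m p = p"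
  unfolding sigma_pow_def
proof (rule ext)
  fix k assume h: "\<And>k. k \<in> E p \<Longrightarrow> of_rat k * of_int m \<in> (\<int>::real set)"
  show "cis (- 2 * pi * of_rat k * of_int m) * p k = p k"
  proof (cases "p k = 0")
    case False
    then have "k \<in> E p" by (simp add: E_def)
    from h[OF this] have "cis (- 2 * pi * (of_rat k * of_int m)) = 1" by (simp only: cis_int_iff)
    then show ?thesis by (simp add: mult.assoc)
  qed simp
qed

lemma expfac_finite: "expfac p \<Longrightarrow> finite (E p)"
  unfolding expfac_def E_def by simp

lemma expfac_pos: "expfac p \<Longrightarrow> p k \<noteq> 0 \<Longrightarrow> k > 0"
  unfolding expfac_def by simp

lemma expfac_diff: "expfac p \<Longrightarrow> expfac q \<Longrightarrow> expfac (diff p q)"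
  unfolding expfac_def diff_def
proof (intro conjI allI impI)
  assume a: "finite {k. p k \<noteq> 0} \<and> (\<forall>k. p k \<noteq> 0 \<longrightarrow> 0 < k)"
     and b: "finite {k. q k \<noteq> 0} \<and> (\<forall>k. q k \<noteq> 0 \<longrightarrow> 0 < k)"
  have "{k. p k - q k \<noteq> 0} \<subseteq> {k. p k \<noteq> 0} \<union> {k. q k \<noteq> 0}" by auto
  then show "finite {k. p k - q k \<noteq> 0}" using a b finite_subset by blast
  fix k assume "p k - q k \<noteq> 0"
  then have "p k \<noteq> 0 \<or> q k \<noteq> 0" by auto
  then show "0 < k" using a b by blast
qed

lemma expfac_sp: "expfac p \<Longrightarrow> expfac (sigma_pow i p)"
  unfolding expfac_def by simp

lemma expfac_trunc: "expfac p \<Longrightarrow> expfac (trunc k p)"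
  unfolding expfac_def trunc_def
proof (intro conjI allI impI)
  assume a: "finite {k. p k \<noteq> 0} \<and> (\<forall>k. p k \<noteq> 0 \<longrightarrow> 0 < k)"
  have "{k'. (if k \<le> k' then p k' else 0) \<noteq> 0} \<subseteq> {k. p k \<noteq> 0}" by auto
  then show "finite {k'. (if k \<le> k' then p k' else 0) \<noteq> 0}" using a finite_subset by blast
  fix k' assume "(if k \<le> k' then p k' else 0) \<noteq> 0"
  then have "p k' \<noteq> 0" by (auto split: if_splits)
  then show "0 < k'" using a by blast
qed

lemma expfac_zero: "expfac (\<lambda>_. 0)"
  unfolding expfac_def by simp

lemma slope_ge: "finite (E p) \<Longrightarrow> p k \<noteq> 0 \<Longrightarrow> k \<le> slope p"
  unfolding slope_def by (auto simp: E_def)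

lemma slope_in: "finite (E p) \<Longrightarrow> p \<noteq> (\<lambda>_. 0) \<Longrightarrow> p (slope p) \<noteq> 0"
proof -
  assume f: "finite (E p)" and n: "p \<noteq> (\<lambda>_. 0)"
  then have ne: "E p \<noteq> {}" unfolding E_def by auto
  have "Max (E p) \<in> E p" using Max_in[OF f ne] .
  then show ?thesis using ne unfolding slope_def by (simp add: E_def)
qed

lemma slope_zero_fun[simp]: "slope (\<lambda>_. 0) = 0"
  unfolding slope_def E_def by simp

lemma slope_nonneg: "expfac p \<Longrightarrow> 0 \<le> slope p"
proof (cases "p = (\<lambda>_. 0)")
  case False
  assume e: "expfac p"
  show ?thesis using slope_in[OF expfac_finite[OF e] False] expfac_pos[OF e] by force
qed simp

lemma slope_zero_iff: "expfac p \<Longrightarrow> slope p = 0 \<longleftrightarrow> p = (\<lambda>_. 0)"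
proof
  assume e: "expfac p" and s: "slope p = 0"
  show "p = (\<lambda>_. 0)"
  proof (rule ccontr)
    assume "p \<noteq> (\<lambda>_. 0)"
    from slope_in[OF expfac_finite[OF e] this] have "p 0 \<noteq> 0" using s by simp
    then show False using expfac_pos[OF e] by blast
  qed
qed simp

lemma slope_pos: "expfac p \<Longrightarrow> p \<noteq> (\<lambda>_. 0) \<Longrightarrow> 0 < slope p"
  using slope_nonneg slope_zero_iff by (metis order_le_less)

lemma slope_unique: "finite (E p) \<Longrightarrow> p s \<noteq> 0 \<Longrightarrow> (\<And>k. k > s \<Longrightarrow> p k = 0) \<Longrightarrow> slope p = s"
proof -
  assume f: "finite (E p)" and s: "p s \<noteq> 0" and h: "\<And>k. k > s \<Longrightarrow> p k = 0"
  have ne: "p \<noteq> (\<lambda>_. 0)" using s by auto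
  have "s \<le> slope p" using slope_ge[OF f s] .
  moreover have "\<not> slope p > s" using h slope_in[OF f ne] by blast
  ultimately show ?thesis by simp
qed

lemma ram_exists: "finite (E q) \<Longrightarrow> \<exists>r::nat. r \<ge> 1 \<and> (\<forall>k\<in>E q. of_nat r * k \<in> \<int>)"
proof -
  assume f: "finite (E q)"
  define d where "d = (\<lambda>k::rat. nat (snd (quotient_of k)))"
  have dpos: "d k > 0" for k unfolding d_def using quotient_of_denom_pos'[of k] by simp
  define r where "r = (\<Prod>k\<in>E q. d k)"
  have "r \<ge> 1" unfolding r_def using dpos by (simp add: Suc_le_eq prod_pos)
  moreover have "of_nat r * k \<in> \<int>" if k: "k \<in> E q" for k
  proof -
    obtain a b where ab: "quotient_of k = (a, b)" by (cases "quotient_of k")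
    have bpos: "b > 0" using quotient_of_denom_pos[OF ab] .
    have kk: "k = of_int a / of_int b" using quotient_of_div[OF ab] .
    have dk: "d k = nat b" by (simp add: d_def ab)
    have bk: "of_int b * k = of_int a" using kk bpos by simp
    have "r = nat b * (\<Prod>k\<in>E q - {k}. d k)" unfolding r_def using prod.remove[OF f k, of d] dk by simp
    then have "of_nat r * k = of_nat (\<Prod>k\<in>E q - {k}. d k) * (of_nat (nat b) * k)"
      by (simp add: algebra_simps)
    also have "\<dots> = of_nat (\<Prod>k\<in>E q - {k}. d k) * of_int a" using bpos bk by simp
    also have "\<dots> = of_int (int (\<Prod>k\<in>E q - {k}. d k) * a)" by (simp only: of_int_mult of_int_of_nat_eq)
    finally show ?thesis by (metis Ints_of_int)
  qed
  ultimately show ?thesis by blast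
qed

lemma ram_prop: "expfac q \<Longrightarrow> ram q \<ge> 1 \<and> (\<forall>k\<in>E q. (of_rat k * of_nat (ram q) :: real) \<in> \<int>)"
proof -
  assume e: "expfac q"
  have "ram q \<ge> 1 \<and> (\<forall>k\<in>E q. of_nat (ram q) * k \<in> \<int>)"
    unfolding ram_def by (rule LeastI_ex) (rule ram_exists[OF expfac_finite[OF e]])
  moreover have "(of_rat k * of_nat n :: real) \<in> \<int>" if "of_nat n * k \<in> \<int>" for k n
  proof -
    from that obtain z where "of_nat n * k = of_int z" by (auto elim: Ints_cases)
    then have "of_rat (of_nat n * k) = (of_int z :: real)" by simp
    then show ?thesis by (simp add: of_rat_mult mult.commute)
  qed
  ultimately show ?thesis by blast
qed

lemma sp_mod:
  assumes e: "expfac q" and sub: "E p \<subseteq> E q"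
  shows "sigma_pow m p = sigma_pow (m mod int (ram q)) p"
proof -
  let ?R = "int (ram q)"
  have "sigma_pow (?R * (m div ?R)) p = p"
  proof (rule sp_id)
    fix k assume "k \<in> E p"
    then have "(of_rat k * of_nat (ram q) :: real) \<in> \<int>" using ram_prop[OF e] sub by blast
    then have "(of_rat k * of_nat (ram q)) * of_int (m div ?R) \<in> (\<int>::real set)" by simp
    then show "(of_rat k * of_int (?R * (m div ?R)) :: real) \<in> \<int>" by (simp add: mult.assoc)
  qed
  then have "sigma_pow m p = sigma_pow (m mod ?R) (sigma_pow (?R * (m div ?R)) p)"
    by (metis sp_add mult_div_mod_eq add.commute)
  then show ?thesis using \<open>sigma_pow (?R * (m div ?R)) p = p\<close> by simp
qed

lemma diff_zero_iff: "diff p q = (\<lambda>_. 0) \<longleftrightarrow> p = q"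
  unfolding diff_def by (auto simp: fun_eq_iff)

lemma core:
  assumes eq: "expfac q" and eqh: "expfac qh" and eC: "expfac C"
    and Ch: "Ch = sigma_pow n C"
    and Bpos: "B > 0"
    and Cge: "\<And>k. C k \<noteq> 0 \<Longrightarrow> B \<le> k"
    and rlt: "\<And>k. k \<ge> B \<Longrightarrow> q k = C k"
    and rhlt: "\<And>k. k \<ge> B \<Longrightarrow> qh k = Ch k"
    and minim: "\<And>k. k < B \<Longrightarrow> k \<in> E q \<Longrightarrow> orbit (trunc k q) \<noteq> orbit (trunc k qh)"
    and dist: "orbit q \<noteq> orbit qh"
    and Fdef: "F = max (slope (diff q C)) (slope (diff qh Ch))"
  shows "0 < F" and "F < B" and "\<And>L. L \<in> Levels C \<Longrightarrow> F < L"
    and "slope (diff (sigma_pow i q) (sigma_pow j qh)) =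
      (if sigma_pow i C = sigma_pow j Ch then F else slope (diff (sigma_pow i C) (sigma_pow j Ch)))"
proof -
  define r where "r = diff q C"
  define rh where "rh = diff qh Ch"
  have eCh: "expfac Ch" using Ch eC expfac_sp by simp
  have er: "expfac r" unfolding r_def using eq eC expfac_diff by blast
  have erh: "expfac rh" unfolding rh_def using eqh eCh expfac_diff by blast
  have r0: "r k = 0" if "k \<ge> B" for k using rlt[OF that] unfolding r_def diff_def by simp
  have rh0: "rh k = 0" if "k \<ge> B" for k using rhlt[OF that] unfolding rh_def diff_def by simp
  have F: "F = max (slope r) (slope rh)" unfolding Fdef r_def rh_def ..
  have sr: "slope r \<ge> 0" "slope rh \<ge> 0" using slope_nonneg er erh by auto
  show Fpos: "0 < F"
  proof (rule ccontr)
    assume "\<not> 0 < F"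
    then have "slope r = 0" "slope rh = 0" using F sr by auto
    then have "r = (\<lambda>_. 0)" "rh = (\<lambda>_. 0)" using slope_zero_iff er erh by auto
    then have "q = C" "qh = Ch" unfolding r_def rh_def using diff_zero_iff by auto
    then have "orbit q = orbit qh" using Ch orbit_sp by simp
    then show False using dist by simp
  qed
  have slt: "slope p < B" if ep: "expfac p" and p0: "\<And>k. k \<ge> B \<Longrightarrow> p k = 0" for p
  proof (cases "p = (\<lambda>_. 0)")
    case True then show ?thesis using Bpos by simp
  next
    case False
    from slope_in[OF expfac_finite[OF ep] False] p0 show ?thesis by (meson not_less)
  qed
  show FB: "F < B" using slt[OF er r0] slt[OF erh rh0] F by simp
  show "F < L" if L: "L \<in> Levels C" for L
  proof -
    from L obtain m where Lm: "L = slope (diff C (sigma_pow m C))" and L0: "L \<noteq> 0"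
      unfolding Levels_def by auto
    have ed: "expfac (diff C (sigma_pow m C))" using eC expfac_sp expfac_diff by blast
    have "diff C (sigma_pow m C) \<noteq> (\<lambda>_. 0)" using Lm L0 by auto
    from slope_in[OF expfac_finite[OF ed] this] have "diff C (sigma_pow m C) L \<noteq> 0" using Lm by simp
    then have "C L \<noteq> 0" unfolding diff_def by auto
    then show ?thesis using Cge FB by fastforce
  qed
  define D where "D = diff (sigma_pow i C) (sigma_pow j Ch)"
  define d where "d = diff (sigma_pow i r) (sigma_pow j rh)"
  have eD: "expfac D" unfolding D_def using eC eCh expfac_sp expfac_diff by blast
  have ed: "expfac d" unfolding d_def using er erh expfac_sp expfac_diff by blast
  have sum: "diff (sigma_pow i q) (sigma_pow j qh) k = D k + d k" for k
    unfolding D_def d_def r_def rh_def diff_def sigma_pow_def by (simp add: algebra_simps)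
  show "slope (diff (sigma_pow i q) (sigma_pow j qh)) =
      (if sigma_pow i C = sigma_pow j Ch then F else slope (diff (sigma_pow i C) (sigma_pow j Ch)))"
  proof (cases "sigma_pow i C = sigma_pow j Ch")
    case True
    then have D0: "D k = 0" for k unfolding D_def diff_def by simp
    have dF: "d k = 0" if "k > F" for k
    proof -
      have "r k = 0" using that F slope_ge[OF expfac_finite[OF er], of k] by fastforce
      moreover have "rh k = 0" using that F slope_ge[OF expfac_finite[OF erh], of k] by fastforce
      ultimately show ?thesis unfolding d_def diff_def sigma_pow_def by simp
    qed
    have dFne: "d F \<noteq> 0"
    proof (cases "slope rh > slope r")
      case True
      then have FF: "F = slope rh" using F by simp
      have "rh \<noteq> (\<lambda>_. 0)" using True sr by auto
      from slope_in[OF expfac_finite[OF erh] this] have "rh F \<noteq> 0" using FF by simp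
      moreover have "r F = 0" using FF True slope_ge[OF expfac_finite[OF er], of F] by fastforce
      ultimately show ?thesis unfolding d_def diff_def sigma_pow_def by simp
    next
      case False
      then have FF: "F = slope r" using F by simp
      have "r \<noteq> (\<lambda>_. 0)" using FF Fpos by auto
      from slope_in[OF expfac_finite[OF er] this] have rF: "r F \<noteq> 0" using FF by simp
      have "C F = 0" using Cge FB by fastforce
      then have "q F \<noteq> 0" using rF unfolding r_def diff_def by simp
      then have FE: "F \<in> E q" unfolding E_def by simp
      show ?thesis
      proof
        assume dz: "d F = 0"
        have "trunc F (sigma_pow i q) = trunc F (sigma_pow j qh)"
        proof (rule ext)
          fix k
          show "trunc F (sigma_pow i q) k = trunc F (sigma_pow j qh) k"
          proof (cases "k \<ge> F")
            case True
            then have "d k = 0" using dz dF by (cases "k = F") auto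
            then have "diff (sigma_pow i q) (sigma_pow j qh) k = 0" using sum D0 by simp
            then show ?thesis unfolding trunc_def diff_def using True by simp
          qed (simp add: trunc_def)
        qed
        then have "sigma_pow i (trunc F q) = sigma_pow j (trunc F qh)" by (simp add: trunc_sp)
        then have "orbit (trunc F q) = orbit (trunc F qh)" by (metis orbit_sp)
        then show False using minim[OF FB FE] by simp
      qed
    qed
    have "slope d = F" using slope_unique[OF expfac_finite[OF ed] dFne dF] .
    moreover have "diff (sigma_pow i q) (sigma_pow j qh) = d" using sum D0 by (simp add: fun_eq_iff)
    ultimately show ?thesis using True by simp
  next
    case False
    then have Dne: "D \<noteq> (\<lambda>_. 0)" unfolding D_def using diff_zero_iff by simp
    define s where "s = slope D"
    have Ds: "D s \<noteq> 0" unfolding s_def using slope_in[OF expfac_finite[OF eD] Dne] .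
    have DB: "k \<ge> B" if "D k \<noteq> 0" for k
    proof -
      have "C k \<noteq> 0" using that unfolding D_def diff_def Ch sigma_pow_def by auto
      then show ?thesis using Cge by simp
    qed
    have dB: "d k = 0" if "k \<ge> B" for k using r0[OF that] rh0[OF that] unfolding d_def diff_def sigma_pow_def by simp
    have "slope (diff (sigma_pow i q) (sigma_pow j qh)) = s"
    proof (rule slope_unique)
      show "finite (E (diff (sigma_pow i q) (sigma_pow j qh)))"
        using expfac_finite expfac_diff expfac_sp eq eqh by blast
      show "diff (sigma_pow i q) (sigma_pow j qh) s \<noteq> 0" using sum Ds dB DB[OF Ds] by simp
      fix k assume k: "k > s"
      have "D k = 0" using k slope_ge[OF expfac_finite[OF eD], of k] unfolding s_def by fastforce
      moreover have "d k = 0" using dB DB[OF Ds] k by simp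
      ultimately show "diff (sigma_pow i q) (sigma_pow j qh) k = 0" using sum by simp
    qed
    then show ?thesis using False unfolding s_def D_def by simp
  qed
qed

lemma setup_lem:
  assumes eq: "expfac q" and eqh: "expfac qh"
  shows "\<exists>n B. common_part_hat q qh = sigma_pow n (common_part q qh) \<and> B > 0
     \<and> (\<forall>k. common_part q qh k \<noteq> 0 \<longrightarrow> B \<le> k)
     \<and> (\<forall>k. k \<ge> B \<longrightarrow> q k = common_part q qh k)
     \<and> (\<forall>k. k \<ge> B \<longrightarrow> qh k = common_part_hat q qh k)
     \<and> (\<forall>k. k < B \<longrightarrow> k \<in> E q \<longrightarrow> orbit (trunc k q) \<noteq> orbit (trunc k qh))
     \<and> E (common_part q qh) \<subseteq> E q \<and> expfac (common_part q qh)"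
proof (cases "has_common q qh")
  case True
  define S where "S = {k. k \<in> E q \<and> orbit (trunc k q) = orbit (trunc k qh)}"
  have fS: "finite S" unfolding S_def using expfac_finite[OF eq] by (rule rev_finite_subset) auto
  have neS: "S \<noteq> {}" using True unfolding has_common_def S_def by auto
  define k0 where "k0 = Min S"
  have k0S: "k0 \<in> S" unfolding k0_def using Min_in[OF fS neS] .
  have k0min: "k0 \<le> k" if "k \<in> S" for k unfolding k0_def using Min_le[OF fS that] .
  have ce: "common_exp q qh = k0" unfolding common_exp_def
    by (rule Least_equality) (use k0S k0min S_def in auto)
  have C: "common_part q qh = trunc k0 q" and Ch: "common_part_hat q qh = trunc k0 qh"
    unfolding common_part_def common_part_hat_def using True ce by auto
  have k0E: "k0 \<in> E q" and oe: "orbit (trunc k0 q) = orbit (trunc k0 qh)" using k0S S_def by auto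
  obtain n where n: "trunc k0 qh = sigma_pow n (trunc k0 q)" using orbit_eqD[OF oe] by blast
  have k0pos: "k0 > 0" using k0E expfac_pos[OF eq] unfolding E_def by simp
  show ?thesis
  proof (rule exI[of _ n], rule exI[of _ k0], intro conjI allI impI)
    show "common_part_hat q qh = sigma_pow n (common_part q qh)" using C Ch n by simp
    show "0 < k0" by (rule k0pos)
    show "k0 \<le> k" if "common_part q qh k \<noteq> 0" for k using that C unfolding trunc_def by (auto split: if_splits)
    show "q k = common_part q qh k" if "k0 \<le> k" for k using that C unfolding trunc_def by simp
    show "qh k = common_part_hat q qh k" if "k0 \<le> k" for k using that Ch unfolding trunc_def by simp
    show "orbit (trunc k q) \<noteq> orbit (trunc k qh)" if "k < k0" "k \<in> E q" for k
      using that k0min unfolding S_def by force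
    show "E (common_part q qh) \<subseteq> E q" using C unfolding E_def trunc_def by auto
    show "expfac (common_part q qh)" using C expfac_trunc[OF eq] by simp
  qed
next
  case False
  have C: "common_part q qh = (\<lambda>_. 0)" and Ch: "common_part_hat q qh = (\<lambda>_. 0)"
    unfolding common_part_def common_part_hat_def using False by auto
  define B where "B = max (slope q) (slope qh) + 1"
  have Bpos: "B > 0" unfolding B_def using slope_nonneg[OF eq] by simp
  show ?thesis
  proof (rule exI[of _ "0::int"], rule exI[of _ B], intro conjI allI impI)
    show "common_part_hat q qh = sigma_pow 0 (common_part q qh)" using C Ch by simp
    show "0 < B" by (rule Bpos)
    show "B \<le> k" if "common_part q qh k \<noteq> 0" for k using that C by simp
    show "q k = common_part q qh k" if "B \<le> k" for k
      using that C slope_ge[OF expfac_finite[OF eq], of k] unfolding B_def by fastforce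
    show "qh k = common_part_hat q qh k" if "B \<le> k" for k
      using that Ch slope_ge[OF expfac_finite[OF eqh], of k] unfolding B_def by fastforce
    show "orbit (trunc k q) \<noteq> orbit (trunc k qh)" if "k < B" "k \<in> E q" for k
      using that False unfolding has_common_def by blast
    show "E (common_part q qh) \<subseteq> E q" using C unfolding E_def by auto
    show "expfac (common_part q qh)" using C expfac_zero by simp
  qed
qed

lemma levels_in: "expfac C \<Longrightarrow> L \<in> Levels C \<Longrightarrow> C L \<noteq> 0"
proof -
  assume eC: "expfac C" and L: "L \<in> Levels C"
  from L obtain m where Lm: "L = slope (diff C (sigma_pow m C))" and L0: "L \<noteq> 0"
    unfolding Levels_def by auto
  have ed: "expfac (diff C (sigma_pow m C))" using eC expfac_sp expfac_diff by blast
  have "diff C (sigma_pow m C) \<noteq> (\<lambda>_. 0)" using Lm L0 by auto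
  from slope_in[OF expfac_finite[OF ed] this] have "diff C (sigma_pow m C) L \<noteq> 0" using Lm by simp
  then show "C L \<noteq> 0" unfolding diff_def sigma_pow_def by auto
qed

lemma diff_sp_val: "diff C (sigma_pow m C) k = 0 \<longleftrightarrow> C k = 0 \<or> (of_rat k * of_int m :: real) \<in> \<int>"
proof -
  have "diff C (sigma_pow m C) k = (1 - cis (- 2 * pi * (of_rat k * of_int m))) * C k"
    unfolding diff_def sigma_pow_def by (simp add: algebra_simps)
  then show ?thesis using cis_int_iff[of "of_rat k * of_int m"] by auto
qed

lemma g_props:
  assumes eC: "expfac C" and s: "s = slope (diff C (sigma_pow m C))"
  shows "s = 0 \<or> s \<in> Levels C"
    and "s \<noteq> 0 \<Longrightarrow> (of_rat s * of_int m :: real) \<notin> \<int>"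
    and "\<And>L. L \<in> Levels C \<Longrightarrow> (of_rat L * of_int m :: real) \<notin> \<int> \<Longrightarrow> L \<le> s"
proof -
  have ed: "expfac (diff C (sigma_pow m C))" using eC expfac_sp expfac_diff by blast
  show "s = 0 \<or> s \<in> Levels C" unfolding Levels_def s by auto
  show "(of_rat s * of_int m :: real) \<notin> \<int>" if "s \<noteq> 0"
  proof -
    have "diff C (sigma_pow m C) \<noteq> (\<lambda>_. 0)" using that s by auto
    from slope_in[OF expfac_finite[OF ed] this] show ?thesis using s diff_sp_val by simp
  qed
  show "L \<le> s" if "L \<in> Levels C" "(of_rat L * of_int m :: real) \<notin> \<int>" for L
  proof -
    have "diff C (sigma_pow m C) L \<noteq> 0" using levels_in[OF eC that(1)] that(2) diff_sp_val by simp
    from slope_ge[OF expfac_finite[OF ed] this] show ?thesis using s by simp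
  qed
qed

lemma levels_pos: "expfac C \<Longrightarrow> L \<in> Levels C \<Longrightarrow> L > 0"
  using levels_in expfac_pos by blast

lemma levels_det:
  assumes eC: "expfac C" and eC': "expfac C'" and Lv: "Levels C = Levels C'"
  shows "slope (diff C (sigma_pow m C)) = slope (diff C' (sigma_pow m C'))"
proof -
  define s where "s = slope (diff C (sigma_pow m C))"
  define s' where "s' = slope (diff C' (sigma_pow m C'))"
  note a = g_props[OF eC s_def] and b = g_props[OF eC' s'_def]
  have 1: "s \<le> s'" if "s \<noteq> 0"
    using a(1) a(2)[OF that] b(3)[of s] that Lv by auto
  have 2: "s' \<le> s" if "s' \<noteq> 0"
    using b(1) b(2)[OF that] a(3)[of s'] that Lv by auto
  have 3: "s \<noteq> 0 \<Longrightarrow> s > 0" using a(1) levels_pos[OF eC] by blast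
  have 4: "s' \<noteq> 0 \<Longrightarrow> s' > 0" using b(1) levels_pos[OF eC'] by blast
  show ?thesis unfolding s_def[symmetric] s'_def[symmetric]
    using 1 2 3 4 by (cases "s = 0"; cases "s' = 0") auto
qed

lemma formula_full:
  assumes eq: "expfac q" and eqh: "expfac qh" and dist: "orbit q \<noteq> orbit qh"
  shows "\<exists>n. common_part_hat q qh = sigma_pow n (common_part q qh)
     \<and> E (common_part q qh) \<subseteq> E q \<and> expfac (common_part q qh)
     \<and> 0 < fission q qh \<and> (\<forall>L \<in> Levels (common_part q qh). fission q qh < L)
     \<and> (\<forall>i j. slope (diff (sigma_pow i q) (sigma_pow j qh)) =
        (if sigma_pow i (common_part q qh) = sigma_pow j (common_part_hat q qh) then fission q qh
         else slope (diff (sigma_pow i (common_part q qh)) (sigma_pow j (common_part_hat q qh)))))"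
proof -
  obtain n B where h: "common_part_hat q qh = sigma_pow n (common_part q qh)" "B > 0"
     "\<forall>k. common_part q qh k \<noteq> 0 \<longrightarrow> B \<le> k"
     "\<forall>k. k \<ge> B \<longrightarrow> q k = common_part q qh k"
     "\<forall>k. k \<ge> B \<longrightarrow> qh k = common_part_hat q qh k"
     "\<forall>k. k < B \<longrightarrow> k \<in> E q \<longrightarrow> orbit (trunc k q) \<noteq> orbit (trunc k qh)"
     "E (common_part q qh) \<subseteq> E q" "expfac (common_part q qh)"
    using setup_lem[OF eq eqh] by blast
  have F: "fission q qh = max (slope (diff q (common_part q qh))) (slope (diff qh (common_part_hat q qh)))"
    unfolding fission_def ..
  have P1: "\<And>k. common_part q qh k \<noteq> 0 \<Longrightarrow> B \<le> k" using h(3) by blast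
  have P2: "\<And>k. k \<ge> B \<Longrightarrow> q k = common_part q qh k" using h(4) by blast
  have P3: "\<And>k. k \<ge> B \<Longrightarrow> qh k = common_part_hat q qh k" using h(5) by blast
  have P4: "\<And>k. k < B \<Longrightarrow> k \<in> E q \<Longrightarrow> orbit (trunc k q) \<noteq> orbit (trunc k qh)" using h(6) by blast
  note cc = core[OF eq eqh h(8) h(1) h(2) P1 P2 P3 P4 dist F]
  show ?thesis
    apply (rule exI[of _ n])
    using cc(1) cc(3) cc(4) h(1,7,8) by blast
qed

lemma compat_formula:
  assumes eq: "expfac q" and eqh: "expfac qh" and dist: "orbit q \<noteq> orbit qh"
    and cp: "compatible q qh"
  shows "slope (diff (sigma_pow i q) (sigma_pow j qh)) =
     (if slope (diff (common_part q qh) (sigma_pow (j - i) (common_part q qh))) = 0 then fission q qh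
      else slope (diff (common_part q qh) (sigma_pow (j - i) (common_part q qh))))"
proof -
  define C where "C = common_part q qh"
  have Ch: "common_part_hat q qh = C" using cp unfolding compatible_def C_def by simp
  obtain n where f: "expfac C"
     "\<forall>i j. slope (diff (sigma_pow i q) (sigma_pow j qh)) =
        (if sigma_pow i C = sigma_pow j C then fission q qh
         else slope (diff (sigma_pow i C) (sigma_pow j C)))"
    using formula_full[OF eq eqh dist] unfolding C_def[symmetric] Ch by blast
  have rel: "diff (sigma_pow i C) (sigma_pow j C) = sigma_pow i (diff C (sigma_pow (j - i) C))"
    by (simp add: sp_diff sp_add)
  have ed: "expfac (diff C (sigma_pow (j - i) C))" using f(1) expfac_sp expfac_diff by blast
  have eqv: "sigma_pow i C = sigma_pow j C \<longleftrightarrow> slope (diff C (sigma_pow (j - i) C)) = 0"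
  proof -
    have "slope (diff C (sigma_pow (j - i) C)) = 0 \<longleftrightarrow> C = sigma_pow (j - i) C"
      using slope_zero_iff[OF ed] diff_zero_iff by simp
    also have "\<dots> \<longleftrightarrow> sigma_pow i C = sigma_pow i (sigma_pow (j - i) C)"
      using sp_inj by metis
    also have "\<dots> \<longleftrightarrow> sigma_pow i C = sigma_pow j C" by (simp add: sp_add)
    finally show ?thesis by simp
  qed
  show ?thesis unfolding C_def[symmetric] using f(2) rel eqv by simp
qed

theorem mainTheorem4:
  assumes "expfac q" and "expfac qh" and "orbit q \<noteq> orbit qh"
  shows "{slope (diff (sigma_pow i q) (sigma_pow j qh)) | i j.
            0 \<le> i \<and> i < int (ram q) \<and> 0 \<le> j \<and> j < int (ram qh)} - {0}
           = Levels (common_part q qh) \<union> {fission q qh}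
         \<and> fission q qh \<notin> Levels (common_part q qh)
         \<and> (compatible q qh \<longrightarrow>
              (\<forall>q' qh'. expfac q' \<and> expfac qh' \<and> orbit q' \<noteq> orbit qh' \<and> compatible q' qh'
                 \<and> Levels (common_part q' qh') = Levels (common_part q qh)
                 \<and> fission q' qh' = fission q qh
                 \<longrightarrow> (\<forall>i j. slope (diff (sigma_pow i q') (sigma_pow j qh'))
                          = slope (diff (sigma_pow i q) (sigma_pow j qh)))))"
proof -
  define C where "C = common_part q qh"
  define Ch where "Ch = common_part_hat q qh"
  define F where "F = fission q qh"
  obtain n where f: "Ch = sigma_pow n C" "E C \<subseteq> E q" "expfac C" "0 < F"
     "\<forall>L \<in> Levels C. F < L"
     "\<forall>i j. slope (diff (sigma_pow i q) (sigma_pow j qh)) =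
        (if sigma_pow i C = sigma_pow j Ch then F
         else slope (diff (sigma_pow i C) (sigma_pow j Ch)))"
    using formula_full[OF assms] unfolding C_def[symmetric] Ch_def[symmetric] F_def[symmetric] by blast
  define R where "R = int (ram q)"
  have R1: "R \<ge> 1" unfolding R_def using ram_prop[OF assms(1)] by simp
  have Rh: "int (ram qh) \<ge> 1" using ram_prop[OF assms(2)] by simp
  have modC: "sigma_pow m C = sigma_pow (m mod R) C" for m
    unfolding R_def by (rule sp_mod[OF assms(1) f(2)])
  have mr: "0 \<le> m mod R" "m mod R < R" for m using R1 by simp_all
  let ?S = "{slope (diff (sigma_pow i q) (sigma_pow j qh)) | i j.
            0 \<le> i \<and> i < int (ram q) \<and> 0 \<le> j \<and> j < int (ram qh)}"
  have part1: "?S - {0} = Levels C \<union> {F}"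
  proof
    show "?S - {0} \<subseteq> Levels C \<union> {F}"
    proof
      fix x assume "x \<in> ?S - {0}"
      then obtain i j where x: "x = slope (diff (sigma_pow i q) (sigma_pow j qh))" and x0: "x \<noteq> 0"
        by blast
      show "x \<in> Levels C \<union> {F}"
      proof (cases "sigma_pow i C = sigma_pow j Ch")
        case True then show ?thesis using x f(6) by simp
      next
        case False
        then have "x = slope (diff (sigma_pow i C) (sigma_pow j Ch))" using x f(6) by simp
        also have "diff (sigma_pow i C) (sigma_pow j Ch) = sigma_pow i (diff C (sigma_pow (j + n - i) C))"
          using f(1) by (simp add: sp_diff sp_add)
        finally have "x = slope (diff C (sigma_pow (j + n - i) C))" by simp
        then show ?thesis using x0 unfolding Levels_def by blast
      qed
    qed
  next
    show "Levels C \<union> {F} \<subseteq> ?S - {0}"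
    proof
      fix x assume "x \<in> Levels C \<union> {F}"
      then show "x \<in> ?S - {0}"
      proof
        assume "x \<in> {F}"
        then have xF: "x = F" by simp
        have "sigma_pow (n mod R) C = sigma_pow 0 Ch" using modC[of n] f(1) by simp
        then have "slope (diff (sigma_pow (n mod R) q) (sigma_pow 0 qh)) = F" using f(6)[rule_format, of "n mod R" 0] by presburger
        then show ?thesis using xF f(4) mr[of n] Rh unfolding R_def by force
      next
        assume L: "x \<in> Levels C"
        then obtain m where Lm: "x = slope (diff C (sigma_pow m C))" and L0: "x \<noteq> 0"
          unfolding Levels_def by auto
        have i0: "sigma_pow ((n - m) mod R) C = sigma_pow (n - m) C" using modC[of "n - m"] by simp
        have ne: "sigma_pow ((n - m) mod R) C \<noteq> sigma_pow 0 Ch"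
        proof
          assume "sigma_pow ((n - m) mod R) C = sigma_pow 0 Ch"
          then have "sigma_pow (n - m) C = sigma_pow (n - m) (sigma_pow m C)" using i0 f(1) by (simp add: sp_add)
          then have "C = sigma_pow m C" by (rule sp_inj)
          then have "x = 0" using Lm by (simp add: diff_def)
          then show False using L0 by simp
        qed
        have "diff (sigma_pow ((n - m) mod R) C) (sigma_pow 0 Ch) = sigma_pow (n - m) (diff C (sigma_pow m C))"
          using i0 f(1) by (simp add: sp_diff sp_add)
        then have "slope (diff (sigma_pow ((n - m) mod R) q) (sigma_pow 0 qh)) = x"
          using f(6)[rule_format, of "(n - m) mod R" 0] ne Lm by (simp only: if_False slope_sp)
        then show ?thesis using L0 mr[of "n - m"] Rh unfolding R_def by force
      qed
    qed
  qed
  have part2: "F \<notin> Levels C" using f(5) by blast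
  have part3: "slope (diff (sigma_pow i q') (sigma_pow j qh')) = slope (diff (sigma_pow i q) (sigma_pow j qh))"
    if cp: "compatible q qh" and h: "expfac q'" "expfac qh'" "orbit q' \<noteq> orbit qh'" "compatible q' qh'"
      "Levels (common_part q' qh') = Levels C" "fission q' qh' = F" for q' qh' i j
  proof -
    obtain n' where f': "expfac (common_part q' qh')"
      using formula_full[OF h(1-3)] by blast
    have g: "slope (diff C (sigma_pow (j - i) C)) =
        slope (diff (common_part q' qh') (sigma_pow (j - i) (common_part q' qh')))"
      by (rule levels_det[OF f(3) f' h(5)[symmetric]])
    show ?thesis
      unfolding compat_formula[OF h(1-4), of i j] compat_formula[OF assms cp, of i j]
      using g h(6) unfolding C_def F_def by simp
  qed
  show ?thesis
    unfolding C_def[symmetric] F_def[symmetric] using part1 part2 part3 by blast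
qed

end
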